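(* Let $M\in\mathcal H(m,n)$, $m+n=4$, $m,n\ge1$, be horizontally periodic with exactly three horizontal cylinders $C_1,C_2,C_3$ whose core curves are linearly independent in $H_1(M;\mathbb R)$. Suppose that no horizontal saddle connection lies in both the top and the bottom boundary of the same cylinder, and that none of $C_1,C_2,C_3$ is semi-simple. Then, up to relabeling, the cylinder diagram of $M$ is the following unique one: there are six horizontal saddle connections $1,\dots,6$; reading left to right, the top boundary of $C_1$ is $1,2$ and its bottom is $4,5$; the top of $C_2$ is $5,3$ and its bottom is $2,6$; the top of $C_3$ is $6,4$ and its bottom is $3,1$ (a saddle connection in the top of one cylinder is glued to the same-labelled saddle connection in the bottom of another). In particular each pair of cylinders shares exactly two saddle connections.
   Context: A cylinder is semi-simple if one of its two boundary components consists of a single horizontal saddle connection. A cylinder diagram records the horizontal cylinders together with the cyclically ordered sequences of saddle connections forming their top and bottom boundaries and their identifications, ignoring lengths. A horizontally periodic surface in a genus three stratum with two zeros has exactly six horizontal saddle connections. *)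

theory Defs
  imports Complex_Main
begin

text \<open>Horizontal saddle connections are the elements of a finite set E (type 'e).
  Cylinders are indexed by i < N.  tp i (resp. bt i) is the list of saddle
  connections on the tp (resp. bottom) boundary of cylinder i read left to
  right, taken up to cyclic rotation.  Each saddle connection lies exactly once
  on some tp and exactly once on some bottom boundary, and the copy on a tp
  boundary is glued by a translation to the copy on a bottom boundary.\<close>

definition cyl_diagram :: "nat \<Rightarrow> 'e set \<Rightarrow> (nat \<Rightarrow> 'e list) \<Rightarrow> (nat \<Rightarrow> 'e list) \<Rightarrow> bool" where
  "cyl_diagram N E tp bt \<longleftrightarrow> finite E \<and>
     (\<forall>i<N. distinct (tp i) \<and> distinct (bt i) \<and> tp i \<noteq> [] \<and> bt i \<noteq> [] \<and>
            set (tp i) \<subseteq> E \<and> set (bt i) \<subseteq> E) \<and>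
     (\<forall>e\<in>E. \<exists>!i. i < N \<and> e \<in> set (tp i)) \<and>
     (\<forall>e\<in>E. \<exists>!i. i < N \<and> e \<in> set (bt i))"

text \<open>Realizability: positive lengths of saddle connections such that the tp
  and bottom boundaries of each cylinder have the same length (heights and
  twists are unconstrained).\<close>
definition realizable :: "nat \<Rightarrow> 'e set \<Rightarrow> (nat \<Rightarrow> 'e list) \<Rightarrow> (nat \<Rightarrow> 'e list) \<Rightarrow> bool" where
  "realizable N E tp bt \<longleftrightarrow> (\<exists>w :: 'e \<Rightarrow> real. (\<forall>e\<in>E. w e > 0) \<and>
      (\<forall>i<N. sum_list (map w (tp i)) = sum_list (map w (bt i))))"

definition cyl_adj :: "(nat \<Rightarrow> 'e list) \<Rightarrow> (nat \<Rightarrow> 'e list) \<Rightarrow> nat \<Rightarrow> nat \<Rightarrow> bool" where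
  "cyl_adj tp bt i j \<longleftrightarrow> set (tp i) \<inter> set (bt j) \<noteq> {} \<or> set (bt i) \<inter> set (tp j) \<noteq> {}"

definition diagram_connected :: "nat \<Rightarrow> (nat \<Rightarrow> 'e list) \<Rightarrow> (nat \<Rightarrow> 'e list) \<Rightarrow> bool" where
  "diagram_connected N tp bt \<longleftrightarrow>
     (\<forall>i<N. \<forall>j<N. (\<lambda>a b. a < N \<and> b < N \<and> cyl_adj tp bt a b)\<^sup>*\<^sup>* i j)"

definition cyc_succ :: "'e list \<Rightarrow> 'e \<Rightarrow> 'e \<Rightarrow> bool" where
  "cyc_succ xs e e' \<longleftrightarrow> (\<exists>j<length xs. xs ! j = e \<and> xs ! ((j + 1) mod length xs) = e')"

text \<open>Endpoints of saddle connections: (e, False) is the left endpoint, (e, True)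
  the right endpoint.  At a junction of consecutive saddle connections e, e' on a
  boundary the right endpoint of e is the left endpoint of e'.\<close>
definition junction :: "nat \<Rightarrow> (nat \<Rightarrow> 'e list) \<Rightarrow> (nat \<Rightarrow> 'e list) \<Rightarrow> 'e \<times> bool \<Rightarrow> 'e \<times> bool \<Rightarrow> bool" where
  "junction N tp bt p q \<longleftrightarrow> (\<exists>i<N. \<exists>e e'. (cyc_succ (tp i) e e' \<or> cyc_succ (bt i) e e') \<and>
      p = (e, True) \<and> q = (e', False))"

definition same_point :: "nat \<Rightarrow> (nat \<Rightarrow> 'e list) \<Rightarrow> (nat \<Rightarrow> 'e list) \<Rightarrow> 'e \<times> bool \<Rightarrow> 'e \<times> bool \<Rightarrow> bool" where
  "same_point N tp bt = (symclp (junction N tp bt))\<^sup>*\<^sup>*"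

definition vertices :: "nat \<Rightarrow> 'e set \<Rightarrow> (nat \<Rightarrow> 'e list) \<Rightarrow> (nat \<Rightarrow> 'e list) \<Rightarrow> ('e \<times> bool) set set" where
  "vertices N E tp bt = {{q \<in> E \<times> UNIV. same_point N tp bt p q} | p. p \<in> E \<times> UNIV}"

text \<open>Each junction at a vertex contributes an angle pi; each right endpoint of a
  saddle connection occurs in exactly two junctions (one on a tp and one on a
  bottom boundary).  So the cone angle at v is 2 pi times the number of right
  endpoints in v, and the order of the zero is that number minus one.\<close>
definition zero_order :: "('e \<times> bool) set \<Rightarrow> nat" where
  "zero_order v = card {e. (e, True) \<in> v} - 1"

definition in_stratum2 :: "nat \<Rightarrow> nat \<Rightarrow> nat \<Rightarrow> 'e set \<Rightarrow> (nat \<Rightarrow> 'e list) \<Rightarrow> (nat \<Rightarrow> 'e list) \<Rightarrow> bool" where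
  "in_stratum2 m n N E tp bt \<longleftrightarrow> (\<exists>v1 v2. v1 \<noteq> v2 \<and> vertices N E tp bt = {v1, v2} \<and>
      zero_order v1 = m \<and> zero_order v2 = n)"

text \<open>Linear independence of the core curves in H_1(M;R), computed in the cellular
  chain complex whose 1-cells are the saddle connections (plus one vertical
  transversal per cylinder) and whose 2-cells are the cylinders cut open along
  the transversals.  The core curve of cylinder i is homologous to the cycle
  formed by its bottom saddle connections; the boundary of the 2-cell of
  cylinder i is (bottom chain) - (tp chain).\<close>
definition core_curves_indep :: "nat \<Rightarrow> 'e set \<Rightarrow> (nat \<Rightarrow> 'e list) \<Rightarrow> (nat \<Rightarrow> 'e list) \<Rightarrow> bool" where
  "core_curves_indep N E tp bt \<longleftrightarrow> (\<forall>a b :: nat \<Rightarrow> real.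
     (\<forall>e\<in>E. (\<Sum>i<N. if e \<in> set (bt i) then a i else 0) =
            (\<Sum>i<N. b i * ((if e \<in> set (bt i) then 1 else 0) - (if e \<in> set (tp i) then 1 else 0))))
     \<longrightarrow> (\<forall>i<N. a i = 0))"

definition semi_simple :: "(nat \<Rightarrow> 'e list) \<Rightarrow> (nat \<Rightarrow> 'e list) \<Rightarrow> nat \<Rightarrow> bool" where
  "semi_simple tp bt i \<longleftrightarrow> length (tp i) = 1 \<or> length (bt i) = 1"

definition cyc_eq :: "'a list \<Rightarrow> 'a list \<Rightarrow> bool" where
  "cyc_eq xs ys \<longleftrightarrow> (\<exists>k. rotate k xs = ys)"

end

theory Submission
  imports Defs
begin

lemma sp_sym: "same_point N tp bt x y \<Longrightarrow> same_point N tp bt y x"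
  unfolding same_point_def by (metis sympD symp_rtranclp_symclp)

lemma sp_trans: "same_point N tp bt x y \<Longrightarrow> same_point N tp bt y z \<Longrightarrow> same_point N tp bt x z"
  unfolding same_point_def by (metis rtranclp_trans)

lemma sp_refl: "same_point N tp bt x x"
  unfolding same_point_def by simp

lemma stratum_card:
  assumes fin: "finite E" and st: "in_stratum2 m n N E tp bt" and m1: "m \<ge> 1" and n1: "n \<ge> 1"
  shows "card E = m + n + 2"
proof -
  from st obtain v1 v2 where ne: "v1 \<noteq> v2" and V: "vertices N E tp bt = {v1, v2}"
    and z1: "zero_order v1 = m" and z2: "zero_order v2 = n"
    unfolding in_stratum2_def by blast
  have "v1 \<in> vertices N E tp bt" using V by simp
  then obtain p1 where p1: "p1 \<in> E \<times> UNIV" and v1: "v1 = {q \<in> E \<times> UNIV. same_point N tp bt p1 q}"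
    unfolding vertices_def by blast
  have "v2 \<in> vertices N E tp bt" using V by simp
  then obtain p2 where p2: "p2 \<in> E \<times> UNIV" and v2: "v2 = {q \<in> E \<times> UNIV. same_point N tp bt p2 q}"
    unfolding vertices_def by blast
  have cover: "x \<in> v1 \<or> x \<in> v2" if "x \<in> E \<times> UNIV" for x
  proof -
    have "{q \<in> E \<times> UNIV. same_point N tp bt x q} \<in> vertices N E tp bt"
      using that unfolding vertices_def by blast
    moreover have "x \<in> {q \<in> E \<times> UNIV. same_point N tp bt x q}" using that sp_refl by blast
    ultimately show ?thesis using V by auto
  qed
  have disj: "x \<notin> v1 \<or> x \<notin> v2" for x
  proof (rule ccontr)
    assume "\<not> (x \<notin> v1 \<or> x \<notin> v2)"
    then have a: "same_point N tp bt p1 x" "same_point N tp bt p2 x" using v1 v2 by auto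
    have "same_point N tp bt p1 q \<longleftrightarrow> same_point N tp bt p2 q" for q
      using a sp_sym sp_trans by metis
    then have "v1 = v2" using v1 v2 by auto
    then show False using ne by simp
  qed
  define R1 where "R1 = {e. (e, True) \<in> v1}"
  define R2 where "R2 = {e. (e, True) \<in> v2}"
  have "R1 \<union> R2 = E" using cover v1 v2 unfolding R1_def R2_def by auto
  moreover have "R1 \<inter> R2 = {}" using disj unfolding R1_def R2_def by auto
  moreover have "R1 \<subseteq> E" "R2 \<subseteq> E" using v1 v2 unfolding R1_def R2_def by auto
  ultimately have "card E = card R1 + card R2"
    using fin by (metis card_Un_disjoint finite_subset)
  moreover have "card R1 = m + 1" using z1 m1 unfolding zero_order_def R1_def by auto
  moreover have "card R2 = n + 1" using z2 n1 unfolding zero_order_def R2_def by auto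
  ultimately show ?thesis by simp
qed

lemma cyc2: "length xs = 2 \<Longrightarrow> distinct xs \<Longrightarrow> set xs = {u, v} \<Longrightarrow> cyc_eq xs [u, v]"
proof -
  assume "length xs = 2" "distinct xs" "set xs = {u, v}"
  then obtain x y where xs: "xs = [x, y]" and "x \<noteq> y" "{x, y} = {u, v}"
    by (cases xs; cases "tl xs"; auto)
  then have "(x = u \<and> y = v) \<or> (x = v \<and> y = u)" by (metis doubleton_eq_iff)
  then show ?thesis unfolding cyc_eq_def xs
    by (metis rotate0 id_apply rotate1_rotate_swap rotate_Suc rotate1.simps(2) append.simps One_nat_def)
qed

lemma split3:
  assumes "X \<subseteq> Y0 \<union> Y1 \<union> Y2" "X \<inter> Y0 = {}" "Y1 \<inter> Y2 = {}" "finite X"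
  shows "card X = card (X \<inter> Y1) + card (X \<inter> Y2)"
proof -
  have "X = (X \<inter> Y1) \<union> (X \<inter> Y2)" using assms by auto
  moreover have "(X \<inter> Y1) \<inter> (X \<inter> Y2) = {}" using assms by auto
  ultimately show ?thesis using assms(4) by (metis card_Un_disjoint finite_Int)
qed

lemma sum3: "(\<Sum>i<(3::nat). f i) = f 0 + f 1 + f 2"
  by (simp add: eval_nat_numeral)


lemma eval_sums:
  fixes a b :: "nat \<Rightarrow> real"
  assumes "i < 3" "j < 3" "\<forall>k<3. e \<in> set (tp k) \<longleftrightarrow> k = i" "\<forall>k<3. e \<in> set (bt k) \<longleftrightarrow> k = j"
  shows "(\<Sum>k<3. if e \<in> set (bt k) then a k else 0) = a j"
    and "(\<Sum>k<3. b k * ((if e \<in> set (bt k) then 1 else 0) - (if e \<in> set (tp k) then 1 else 0))) = b j - b i"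
proof -
  have "(\<Sum>k<3. if e \<in> set (bt k) then a k else 0) = (\<Sum>k<3. if k = j then a k else 0)"
    by (rule sum.cong) (use assms in auto)
  then show "(\<Sum>k<3. if e \<in> set (bt k) then a k else 0) = a j" using assms by simp
  have "(\<Sum>k<3. b k * ((if e \<in> set (bt k) then 1 else 0) - (if e \<in> set (tp k) then 1 else 0)))
     = (\<Sum>k<3. (if k = j then b k else 0) - (if k = i then b k else 0))"
    by (rule sum.cong) (use assms in auto)
  also have "\<dots> = b j - b i" using assms by (simp add: sum_subtractf)
  finally show "(\<Sum>k<3. b k * ((if e \<in> set (bt k) then 1 else 0) - (if e \<in> set (tp k) then 1 else 0))) = b j - b i" .
qed

lemma cyc_from:
  assumes "distinct l" "length l = 2" "inj_on \<phi> (set l)" "\<phi> ` set l = {u, v}"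
  shows "cyc_eq (map \<phi> l) [u, v]"
  by (rule cyc2) (use assms in \<open>auto simp: distinct_map\<close>)

theorem mainTheorem20:
  fixes m n :: nat and E :: "'e set" and tp bt :: "nat \<Rightarrow> 'e list"
  assumes "m + n = 4" and "m \<ge> 1" and "n \<ge> 1"
    and "cyl_diagram 3 E tp bt"
    and "realizable 3 E tp bt"
    and "diagram_connected 3 tp bt"
    and "in_stratum2 m n 3 E tp bt"
    and "core_curves_indep 3 E tp bt"
    and "\<forall>i<3. set (tp i) \<inter> set (bt i) = {}"
    and "\<forall>i<3. \<not> semi_simple tp bt i"
  shows "(\<exists>\<sigma> \<phi>. bij_betw \<sigma> {..<(3::nat)} {..<(3::nat)} \<and> bij_betw \<phi> E {1..(6::nat)} \<and>
            cyc_eq (map \<phi> (tp (\<sigma> 0))) [1,2] \<and> cyc_eq (map \<phi> (bt (\<sigma> 0))) [4,5] \<and>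
            cyc_eq (map \<phi> (tp (\<sigma> 1))) [5,3] \<and> cyc_eq (map \<phi> (bt (\<sigma> 1))) [2,6] \<and>
            cyc_eq (map \<phi> (tp (\<sigma> 2))) [6,4] \<and> cyc_eq (map \<phi> (bt (\<sigma> 2))) [3,1])
         \<and> (\<forall>i<3. \<forall>j<3. i \<noteq> j \<longrightarrow>
              card ((set (tp i) \<union> set (bt i)) \<inter> (set (tp j) \<union> set (bt j))) = 2)"
proof -
  define T where "T i = set (tp i)" for i
  define B where "B i = set (bt i)" for i
  from assms(4) have finE: "finite E" and
    TB: "\<forall>i<3. distinct (tp i) \<and> distinct (bt i) \<and> tp i \<noteq> [] \<and> bt i \<noteq> [] \<and> set (tp i) \<subseteq> E \<and> set (bt i) \<subseteq> E"
    and uT: "\<forall>e\<in>E. \<exists>!i. i < 3 \<and> e \<in> set (tp i)"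
    and uB: "\<forall>e\<in>E. \<exists>!i. i < 3 \<and> e \<in> set (bt i)"
    unfolding cyl_diagram_def by auto
  have cardE: "card E = 6" using stratum_card[OF finE assms(7) assms(2) assms(3)] assms(1) by simp
  have i3: "i < 3 \<Longrightarrow> i = 0 \<or> i = 1 \<or> i = (2::nat)" for i by auto
  have Tsub: "T i \<subseteq> E" "B i \<subseteq> E" if "i < 3" for i using TB that unfolding T_def B_def by auto
  have finT: "finite (T i)" "finite (B i)" for i unfolding T_def B_def by auto
  have Tdisj: "T i \<inter> T j = {}" if "i < 3" "j < 3" "i \<noteq> j" for i j
    using uT Tsub that unfolding T_def by blast
  have Bdisj: "B i \<inter> B j = {}" if "i < 3" "j < 3" "i \<noteq> j" for i j
    using uB Tsub that unfolding B_def by blast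
  have Tcov: "E \<subseteq> T 0 \<union> T 1 \<union> T 2"
  proof
    fix e assume "e \<in> E"
    then obtain i where "i < 3" "e \<in> T i" using uT unfolding T_def by blast
    then show "e \<in> T 0 \<union> T 1 \<union> T 2" using i3 by blast
  qed
  have Bcov: "E \<subseteq> B 0 \<union> B 1 \<union> B 2"
  proof
    fix e assume "e \<in> E"
    then obtain i where "i < 3" "e \<in> B i" using uB unfolding B_def by blast
    then show "e \<in> B 0 \<union> B 1 \<union> B 2" using i3 by blast
  qed
  have TBd: "T i \<inter> B i = {}" if "i < 3" for i using assms(9) that unfolding T_def B_def by auto
  have cT: "card (T i) \<ge> 2" "card (B i) \<ge> 2" if "i < 3" for i
    using TB assms(10) that distinct_card[of "tp i"] distinct_card[of "bt i"]
    unfolding T_def B_def semi_simple_def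
    by (metis One_nat_def Suc_1 Suc_leI length_greater_0_conv nat_less_le)+
  have TsE: "T 0 \<subseteq> E" "T 1 \<subseteq> E" "T 2 \<subseteq> E" "B 0 \<subseteq> E" "B 1 \<subseteq> E" "B 2 \<subseteq> E" using Tsub by auto
  have ET: "E = T 0 \<union> T 1 \<union> T 2" "E = B 0 \<union> B 1 \<union> B 2" using Tcov Bcov TsE by auto
  have "card E = card (T 0) + card (T 1) + card (T 2)"
    unfolding ET(1) using Tdisj finT by (simp add: card_Un_disjoint Int_Un_distrib2)
  moreover have "card (T 0) \<ge> 2" "card (T 1) \<ge> 2" "card (T 2) \<ge> 2" using cT by auto
  ultimately have cT0: "card (T 0) = 2" "card (T 1) = 2" "card (T 2) = 2" using cardE by linarith+
  have "card E = card (B 0) + card (B 1) + card (B 2)"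
    unfolding ET(2) using Bdisj finT by (simp add: card_Un_disjoint Int_Un_distrib2)
  moreover have "card (B 0) \<ge> 2" "card (B 1) \<ge> 2" "card (B 2) \<ge> 2" using cT by auto
  ultimately have cB0: "card (B 0) = 2" "card (B 1) = 2" "card (B 2) = 2" using cardE by linarith+
  have T01: "T 0 \<inter> T 1 = {}" "T 0 \<inter> T 2 = {}" "T 1 \<inter> T 2 = {}" using Tdisj by auto
  have B01: "B 0 \<inter> B 1 = {}" "B 0 \<inter> B 2 = {}" "B 1 \<inter> B 2 = {}" using Bdisj by auto
  have TB0: "T 0 \<inter> B 0 = {}" "T 1 \<inter> B 1 = {}" "T 2 \<inter> B 2 = {}" using TBd by auto
  have r0: "card (T 0) = card (T 0 \<inter> B 1) + card (T 0 \<inter> B 2)"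
    by (rule split3[of "T 0" "B 0"]) (use TsE Bcov TB0 B01 finT in auto)
  have r1: "card (T 1) = card (T 1 \<inter> B 0) + card (T 1 \<inter> B 2)"
    by (rule split3[of "T 1" "B 1"]) (use TsE Bcov TB0 B01 finT in auto)
  have r2: "card (T 2) = card (T 2 \<inter> B 0) + card (T 2 \<inter> B 1)"
    by (rule split3[of "T 2" "B 2"]) (use TsE Bcov TB0 B01 finT in auto)
  have s0: "card (B 0) = card (B 0 \<inter> T 1) + card (B 0 \<inter> T 2)"
    by (rule split3[of "B 0" "T 0"]) (use TsE Tcov TB0 T01 finT in auto)
  have s1: "card (B 1) = card (B 1 \<inter> T 0) + card (B 1 \<inter> T 2)"
    by (rule split3[of "B 1" "T 1"]) (use TsE Tcov TB0 T01 finT in auto)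
  have s2: "card (B 2) = card (B 2 \<inter> T 0) + card (B 2 \<inter> T 1)"
    by (rule split3[of "B 2" "T 2"]) (use TsE Tcov TB0 T01 finT in auto)
  have s0': "card (B 0) = card (T 1 \<inter> B 0) + card (T 2 \<inter> B 0)" using s0 by (simp add: Int_commute)
  have s1': "card (B 1) = card (T 0 \<inter> B 1) + card (T 2 \<inter> B 1)" using s1 by (simp add: Int_commute)
  have s2': "card (B 2) = card (T 0 \<inter> B 2) + card (T 1 \<inter> B 2)" using s2 by (simp add: Int_commute)
  note eqs = r0 r1 r2 s0' s1' s2' cT0 cB0
  have cases: "card (T 0 \<inter> B 1) = 1 \<and> card (T 0 \<inter> B 2) = 1 \<and> card (T 1 \<inter> B 0) = 1 \<and>
      card (T 1 \<inter> B 2) = 1 \<and> card (T 2 \<inter> B 0) = 1 \<and> card (T 2 \<inter> B 1) = 1"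
  proof (rule ccontr)
    assume nc: "\<not> ?thesis"
    have "(card (T 0 \<inter> B 2) = 0 \<and> card (T 1 \<inter> B 0) = 0 \<and> card (T 2 \<inter> B 1) = 0) \<or>
          (card (T 0 \<inter> B 1) = 0 \<and> card (T 1 \<inter> B 2) = 0 \<and> card (T 2 \<inter> B 0) = 0)"
      using nc eqs by linarith
    then consider
      (A) "T 0 \<inter> B 2 = {}" "T 1 \<inter> B 0 = {}" "T 2 \<inter> B 1 = {}"
    | (C) "T 0 \<inter> B 1 = {}" "T 1 \<inter> B 2 = {}" "T 2 \<inter> B 0 = {}"
      using finT by (metis card_0_eq finite_Int)
    then show False
    proof cases
      case A
      define a :: "nat \<Rightarrow> real" where "a i = (if i = 0 then -2 else 1)" for i
      define b :: "nat \<Rightarrow> real" where "b i = real i" for i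
      have "\<forall>e\<in>E. (\<Sum>i<3. if e \<in> set (bt i) then a i else 0) =
            (\<Sum>i<3. b i * ((if e \<in> set (bt i) then 1 else 0) - (if e \<in> set (tp i) then 1 else 0)))"
      proof
        fix e assume "e \<in> E"
        then have "e \<in> T 0 \<union> T 1 \<union> T 2" "e \<in> B 0 \<union> B 1 \<union> B 2" using ET by auto
        obtain i where i: "i < 3" "e \<in> set (tp i)" "\<forall>k<3. e \<in> set (tp k) \<longleftrightarrow> k = i"
          using uT \<open>e \<in> E\<close> by metis
        obtain j where j: "j < 3" "e \<in> set (bt j)" "\<forall>k<3. e \<in> set (bt k) \<longleftrightarrow> k = j"
          using uB \<open>e \<in> E\<close> by metis
        have "i \<noteq> j" using TBd i j unfolding T_def B_def by blast
        moreover have "e \<in> T i \<inter> B j" using i j unfolding T_def B_def by blast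
        ultimately have "a j = b j - b i" using i3[OF i(1)] i3[OF j(1)] A
          by (elim disjE) ((simp add: a_def b_def; fail) | blast)+
        then show "(\<Sum>i<3. if e \<in> set (bt i) then a i else 0) =
            (\<Sum>i<3. b i * ((if e \<in> set (bt i) then 1 else 0) - (if e \<in> set (tp i) then 1 else 0)))"
          using eval_sums[OF i(1) j(1) i(3) j(3)] by simp
      qed
      from assms(8)[unfolded core_curves_indep_def, THEN spec[of _ a], THEN spec[of _ b], THEN mp, OF this]
      have "a 0 = 0" by simp
      then show False unfolding a_def by simp
    next
      case C
      define a :: "nat \<Rightarrow> real" where "a i = (if i = 2 then 2 else -1)" for i
      define b :: "nat \<Rightarrow> real" where "b i = real i" for i
      have "\<forall>e\<in>E. (\<Sum>i<3. if e \<in> set (bt i) then a i else 0) =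
            (\<Sum>i<3. b i * ((if e \<in> set (bt i) then 1 else 0) - (if e \<in> set (tp i) then 1 else 0)))"
      proof
        fix e assume "e \<in> E"
        then have "e \<in> T 0 \<union> T 1 \<union> T 2" "e \<in> B 0 \<union> B 1 \<union> B 2" using ET by auto
        obtain i where i: "i < 3" "e \<in> set (tp i)" "\<forall>k<3. e \<in> set (tp k) \<longleftrightarrow> k = i"
          using uT \<open>e \<in> E\<close> by metis
        obtain j where j: "j < 3" "e \<in> set (bt j)" "\<forall>k<3. e \<in> set (bt k) \<longleftrightarrow> k = j"
          using uB \<open>e \<in> E\<close> by metis
        have "i \<noteq> j" using TBd i j unfolding T_def B_def by blast
        moreover have "e \<in> T i \<inter> B j" using i j unfolding T_def B_def by blast
        ultimately have "a j = b j - b i" using i3[OF i(1)] i3[OF j(1)] C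
          by (elim disjE) ((simp add: a_def b_def; fail) | blast)+
        then show "(\<Sum>i<3. if e \<in> set (bt i) then a i else 0) =
            (\<Sum>i<3. b i * ((if e \<in> set (bt i) then 1 else 0) - (if e \<in> set (tp i) then 1 else 0)))"
          using eval_sums[OF i(1) j(1) i(3) j(3)] by simp
      qed
      from assms(8)[unfolded core_curves_indep_def, THEN spec[of _ a], THEN spec[of _ b], THEN mp, OF this]
      have "a 0 = 0" by simp
      then show False unfolding a_def by simp
    qed
  qed
  obtain e01 where e01: "T 0 \<inter> B 1 = {e01}" using cases card_1_singletonE by blast
  obtain e02 where e02: "T 0 \<inter> B 2 = {e02}" using cases card_1_singletonE by blast
  obtain e10 where e10: "T 1 \<inter> B 0 = {e10}" using cases card_1_singletonE by blast
  obtain e12 where e12: "T 1 \<inter> B 2 = {e12}" using cases card_1_singletonE by blast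
  obtain e20 where e20: "T 2 \<inter> B 0 = {e20}" using cases card_1_singletonE by blast
  obtain e21 where e21: "T 2 \<inter> B 1 = {e21}" using cases card_1_singletonE by blast
  have "T 0 = (T 0 \<inter> B 1) \<union> (T 0 \<inter> B 2)" using TsE Bcov TB0 by blast
  then have T0: "T 0 = {e01, e02}" using e01 e02 by (simp add: insert_commute)
  have "T 1 = (T 1 \<inter> B 0) \<union> (T 1 \<inter> B 2)" using TsE Bcov TB0 by blast
  then have T1: "T 1 = {e10, e12}" using e10 e12 by (simp add: insert_commute)
  have "T 2 = (T 2 \<inter> B 0) \<union> (T 2 \<inter> B 1)" using TsE Bcov TB0 by blast
  then have T2: "T 2 = {e20, e21}" using e20 e21 by (simp add: insert_commute)
  have "B 0 = (T 1 \<inter> B 0) \<union> (T 2 \<inter> B 0)" using TsE Tcov TB0 by blast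
  then have B0: "B 0 = {e10, e20}" using e10 e20 by (simp add: insert_commute)
  have "B 1 = (T 0 \<inter> B 1) \<union> (T 2 \<inter> B 1)" using TsE Tcov TB0 by blast
  then have B1: "B 1 = {e01, e21}" using e01 e21 by (simp add: insert_commute)
  have "B 2 = (T 0 \<inter> B 2) \<union> (T 1 \<inter> B 2)" using TsE Tcov TB0 by blast
  then have B2: "B 2 = {e02, e12}" using e02 e12 by (simp add: insert_commute)
  have d1: "e01 \<noteq> e02" "e10 \<noteq> e12" "e20 \<noteq> e21"
  proof -
    show "e01 \<noteq> e02" proof assume "e01 = e02" then have "card (T 0) = 1" unfolding T0 by simp
      then show False using cT0 by simp qed
    show "e10 \<noteq> e12" proof assume "e10 = e12" then have "card (T 1) = 1" unfolding T1 by simp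
      then show False using cT0 by simp qed
    show "e20 \<noteq> e21" proof assume "e20 = e21" then have "card (T 2) = 1" unfolding T2 by simp
      then show False using cT0 by simp qed
  qed
  have d2: "e01 \<noteq> e10" "e01 \<noteq> e12" "e02 \<noteq> e10" "e02 \<noteq> e12"
     "e01 \<noteq> e20" "e01 \<noteq> e21" "e02 \<noteq> e20" "e02 \<noteq> e21"
     "e10 \<noteq> e20" "e10 \<noteq> e21" "e12 \<noteq> e20" "e12 \<noteq> e21"
    using T01 unfolding T0 T1 T2 by blast+
  note dd = d1 d2 d1[symmetric] d2[symmetric]
  have Eeq: "E = {e01, e02, e10, e12, e20, e21}" using ET T0 T1 T2 by auto
  define \<phi> :: "'e \<Rightarrow> nat" where "\<phi> x = (if x = e01 then 2 else if x = e02 then 1 else if x = e10 then 5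
      else if x = e12 then 3 else if x = e20 then 4 else 6)" for x
  have pv: "\<phi> e01 = 2" "\<phi> e02 = 1" "\<phi> e10 = 5" "\<phi> e12 = 3" "\<phi> e20 = 4" "\<phi> e21 = 6"
    unfolding \<phi>_def using dd by auto
  have img: "\<phi> ` E = {1..6}"
  proof -
    have "\<phi> ` E = {2, 1, 5, 3, 4, 6}" unfolding Eeq using pv by simp
    also have "\<dots> = {1..6}" by auto
    finally show ?thesis .
  qed
  have inj: "inj_on \<phi> E"
    by (rule eq_card_imp_inj_on) (use finE img cardE in simp_all)
  have bij: "bij_betw \<phi> E {1..6}" using inj img unfolding bij_betw_def by simp
  have injT: "inj_on \<phi> (set (tp i))" "inj_on \<phi> (set (bt i))" if "i < 3" for i
    using inj Tsub that unfolding T_def B_def by (meson inj_on_subset)+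
  have dT: "distinct (tp i)" "distinct (bt i)" if "i < 3" for i using TB that by auto
  have lT: "length (tp i) = 2" if "i < 3" "card (set (tp i)) = 2" for i
    using dT that distinct_card by metis
  have lB: "length (bt i) = 2" if "i < 3" "card (set (bt i)) = 2" for i
    using dT that distinct_card by metis
  have c1: "cyc_eq (map \<phi> (tp 0)) [1,2]"
    by (rule cyc_from) (use dT lT injT cT0 T0 pv in \<open>auto simp: T_def\<close>)
  have c2: "cyc_eq (map \<phi> (bt 0)) [4,5]"
    by (rule cyc_from) (use dT lB injT cB0 B0 pv in \<open>auto simp: B_def\<close>)
  have c3: "cyc_eq (map \<phi> (tp 1)) [5,3]"
    by (rule cyc_from) (use dT lT injT cT0 T1 pv in \<open>auto simp: T_def\<close>)
  have c4: "cyc_eq (map \<phi> (bt 1)) [2,6]"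
    by (rule cyc_from) (use dT lB injT cB0 B1 pv in \<open>auto simp: B_def\<close>)
  have c5: "cyc_eq (map \<phi> (tp 2)) [6,4]"
    by (rule cyc_from) (use dT lT injT cT0 T2 pv in \<open>auto simp: T_def\<close>)
  have c6: "cyc_eq (map \<phi> (bt 2)) [3,1]"
    by (rule cyc_from) (use dT lB injT cB0 B2 pv in \<open>auto simp: B_def\<close>)
  have part1: "\<exists>\<sigma> \<phi>. bij_betw \<sigma> {..<(3::nat)} {..<(3::nat)} \<and> bij_betw \<phi> E {1..(6::nat)} \<and>
            cyc_eq (map \<phi> (tp (\<sigma> 0))) [1,2] \<and> cyc_eq (map \<phi> (bt (\<sigma> 0))) [4,5] \<and>
            cyc_eq (map \<phi> (tp (\<sigma> 1))) [5,3] \<and> cyc_eq (map \<phi> (bt (\<sigma> 1))) [2,6] \<and>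
            cyc_eq (map \<phi> (tp (\<sigma> 2))) [6,4] \<and> cyc_eq (map \<phi> (bt (\<sigma> 2))) [3,1]"
    by (rule exI[of _ id], rule exI[of _ \<phi>]) (use bij c1 c2 c3 c4 c5 c6 in simp)
  have k01: "(T 0 \<union> B 0) \<inter> (T 1 \<union> B 1) = {e01, e10}" unfolding T0 T1 B0 B1 using dd by auto
  have k02: "(T 0 \<union> B 0) \<inter> (T 2 \<union> B 2) = {e02, e20}" unfolding T0 T2 B0 B2 using dd by auto
  have k12: "(T 1 \<union> B 1) \<inter> (T 2 \<union> B 2) = {e12, e21}" unfolding T1 T2 B1 B2 using dd by auto
  have part2: "card ((T i \<union> B i) \<inter> (T j \<union> B j)) = 2" if "i < 3" "j < 3" "i \<noteq> j" for i j
  proof -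
    have "card {e01, e10} = 2" "card {e02, e20} = 2" "card {e12, e21} = 2" using dd by auto
    then show ?thesis using i3[OF that(1)] i3[OF that(2)] that(3) k01 k02 k12
      by (elim disjE) (simp_all add: Int_commute)
  qed
  show ?thesis
  proof (intro conjI allI impI)
    show "\<exists>\<sigma> \<phi>. bij_betw \<sigma> {..<(3::nat)} {..<(3::nat)} \<and> bij_betw \<phi> E {1..(6::nat)} \<and>
            cyc_eq (map \<phi> (tp (\<sigma> 0))) [1,2] \<and> cyc_eq (map \<phi> (bt (\<sigma> 0))) [4,5] \<and>
            cyc_eq (map \<phi> (tp (\<sigma> 1))) [5,3] \<and> cyc_eq (map \<phi> (bt (\<sigma> 1))) [2,6] \<and>
            cyc_eq (map \<phi> (tp (\<sigma> 2))) [6,4] \<and> cyc_eq (map \<phi> (bt (\<sigma> 2))) [3,1]"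
      by (rule part1)
  next
    fix i j :: nat assume "i < 3" "j < 3" "i \<noteq> j"
    then show "card ((set (tp i) \<union> set (bt i)) \<inter> (set (tp j) \<union> set (bt j))) = 2"
      by (rule part2[unfolded T_def B_def])
  qed
qed

end
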